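(* Let $d$ and $k$ be positive integers. For all sufficiently large $n$, $f(n,n-k,d,2) = n-2d-k+3$.
   Context: All graphs are finite, simple and undirected. The order of a graph is its number of vertices. For a graph $G$ and positive integers $d, r$, let $f_G(d,r)$ be the largest integer $t$ such that in every coloring of the edges of $G$ with $r$ colors there is a monochromatic subgraph (all of its edges of one color) with minimum degree at least $d$ and order at least $t$. For integers $n > K > d$, let $f(n,K,d,r)$ be the minimum of $f_G(d,r)$ over all graphs $G$ with $n$ vertices and minimum degree at least $K$. *)

theory Defs
  imports Main
begin

definition edges_on :: "nat set \<Rightarrow> nat set set" where
  "edges_on V = {e. \<exists>u v. e = {u, v} \<and> u \<noteq> v \<and> u \<in> V \<and> v \<in> V}"

definition is_graph :: "nat set \<Rightarrow> nat set set \<Rightarrow> bool" where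
  "is_graph V E \<longleftrightarrow> finite V \<and> E \<subseteq> edges_on V"

definition deg :: "nat set \<Rightarrow> nat set set \<Rightarrow> nat \<Rightarrow> nat" where
  "deg V E v = card {u \<in> V. {u, v} \<in> E}"

definition min_deg_ge :: "nat set \<Rightarrow> nat set set \<Rightarrow> nat \<Rightarrow> bool" where
  "min_deg_ge V E d \<longleftrightarrow> (\<forall>v\<in>V. d \<le> deg V E v)"

definition is_coloring :: "nat set set \<Rightarrow> (nat set \<Rightarrow> nat) \<Rightarrow> nat \<Rightarrow> bool" where
  "is_coloring E c r \<longleftrightarrow> (\<forall>e\<in>E. c e < r)"

definition has_mono_sub ::
  "nat set \<Rightarrow> nat set set \<Rightarrow> (nat set \<Rightarrow> nat) \<Rightarrow> nat \<Rightarrow> nat \<Rightarrow> bool" where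
  "has_mono_sub V E c d t \<longleftrightarrow>
     (\<exists>V' E' i. V' \<subseteq> V \<and> E' \<subseteq> E \<and> E' \<subseteq> edges_on V' \<and>
        (\<forall>e\<in>E'. c e = i) \<and> min_deg_ge V' E' d \<and> t \<le> card V')"

definition fG :: "nat set \<Rightarrow> nat set set \<Rightarrow> nat \<Rightarrow> nat \<Rightarrow> nat" where
  "fG V E d r = (GREATEST t. \<forall>c. is_coloring E c r \<longrightarrow> has_mono_sub V E c d t)"

(* f(n,K,d,r): minimum of f_G(d,r) over graphs G on n vertices (w.l.o.g. the
   vertex set {0..<n}) with minimum degree at least K *)
definition f :: "nat \<Rightarrow> nat \<Rightarrow> nat \<Rightarrow> nat \<Rightarrow> nat" where
  "f n K d r = Min {fG {..<n} E d r | E. is_graph {..<n} E \<and> min_deg_ge {..<n} E K}"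

end

theory Submission
  imports Defs
begin


definition Nc :: "nat set \<Rightarrow> nat set set \<Rightarrow> (nat set \<Rightarrow> nat) \<Rightarrow> nat \<Rightarrow> nat \<Rightarrow> nat set" where
  "Nc V E c i v = {u\<in>V. {u,v}\<in>E \<and> c {u,v} = i}"

definition goodW :: "nat set \<Rightarrow> nat set set \<Rightarrow> (nat set \<Rightarrow> nat) \<Rightarrow> nat \<Rightarrow> nat \<Rightarrow> nat set \<Rightarrow> bool" where
  "goodW V E c i d W \<longleftrightarrow> W \<subseteq> V \<and> (\<forall>v\<in>W. d \<le> card (Nc V E c i v \<inter> W))"

definition core :: "nat set \<Rightarrow> nat set set \<Rightarrow> (nat set \<Rightarrow> nat) \<Rightarrow> nat \<Rightarrow> nat \<Rightarrow> nat set" where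
  "core V E c i d = \<Union>{W. goodW V E c i d W}"

lemma core_sub: "core V E c i d \<subseteq> V"
  unfolding core_def goodW_def by auto

lemma good_sub_core: "goodW V E c i d W \<Longrightarrow> W \<subseteq> core V E c i d"
  unfolding core_def by auto

lemma core_good:
  assumes "finite V"
  shows "goodW V E c i d (core V E c i d)"
  unfolding goodW_def
proof (intro conjI ballI)
  show "core V E c i d \<subseteq> V" by (rule core_sub)
  fix v assume "v \<in> core V E c i d"
  then obtain W where W: "goodW V E c i d W" "v \<in> W" unfolding core_def by auto
  then have "d \<le> card (Nc V E c i v \<inter> W)" unfolding goodW_def by auto
  also have "\<dots> \<le> card (Nc V E c i v \<inter> core V E c i d)"
    apply (rule card_mono)
    using assms core_sub[of V E c i d] apply (meson finite_Int finite_subset)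
    using good_sub_core[OF W(1)] by auto
  finally show "d \<le> card (Nc V E c i v \<inter> core V E c i d)" .
qed

lemma no_loop: "E \<subseteq> edges_on V \<Longrightarrow> {v,v} \<notin> E"
  unfolding edges_on_def by auto

lemma Nc_sym: "u \<in> V \<Longrightarrow> v \<in> V \<Longrightarrow> u \<in> Nc V E c i v \<longleftrightarrow> v \<in> Nc V E c i u"
  unfolding Nc_def by (auto simp: insert_commute)

lemma core_mono_sub:
  assumes "finite V" "E \<subseteq> edges_on V"
  shows "has_mono_sub V E c d (card (core V E c i d))"
proof -
  let ?C = "core V E c i d"
  let ?E = "{e\<in>E. e \<subseteq> ?C \<and> c e = i}"
  have g: "goodW V E c i d ?C" by (rule core_good[OF assms(1)])
  have "?E \<subseteq> edges_on ?C"
  proof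
    fix e assume e: "e \<in> ?E"
    then obtain u v where uv: "e = {u,v}" "u \<noteq> v" using assms(2) unfolding edges_on_def by blast
    then have "u \<in> ?C" "v \<in> ?C" using e by auto
    then show "e \<in> edges_on ?C" unfolding edges_on_def using uv by blast
  qed
  moreover have "min_deg_ge ?C ?E d"
    unfolding min_deg_ge_def deg_def
  proof
    fix v assume v: "v \<in> ?C"
    have "{u \<in> ?C. {u, v} \<in> ?E} = Nc V E c i v \<inter> ?C"
      using v core_sub[of V E c i d] unfolding Nc_def by auto
    then show "d \<le> card {u \<in> ?C. {u, v} \<in> ?E}" using g v unfolding goodW_def by auto
  qed
  moreover have "?C \<subseteq> V" by (rule core_sub)
  moreover have "?E \<subseteq> E" "\<forall>e\<in>?E. c e = i" by auto
  ultimately show ?thesis unfolding has_mono_sub_def by blast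
qed

lemma peel_exists:
  assumes "finite V" "S \<subseteq> V - core V E c i d" "S \<noteq> {}"
  shows "\<exists>s\<in>S. card (Nc V E c i s \<inter> (S \<union> core V E c i d)) < d"
proof (rule ccontr)
  let ?C = "core V E c i d"
  assume "\<not> ?thesis"
  then have h: "\<forall>s\<in>S. d \<le> card (Nc V E c i s \<inter> (S \<union> ?C))" by auto
  have g: "goodW V E c i d ?C" by (rule core_good[OF assms(1)])
  have "goodW V E c i d (S \<union> ?C)"
    unfolding goodW_def
  proof (intro conjI ballI)
    show "S \<union> ?C \<subseteq> V" using assms(2) core_sub[of V E c i d] by auto
    fix v assume "v \<in> S \<union> ?C"
    then show "d \<le> card (Nc V E c i v \<inter> (S \<union> ?C))"
    proof
      assume "v \<in> S" then show ?thesis using h by auto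
    next
      assume v: "v \<in> ?C"
      have "d \<le> card (Nc V E c i v \<inter> ?C)" using g v unfolding goodW_def by auto
      also have "\<dots> \<le> card (Nc V E c i v \<inter> (S \<union> ?C))"
        apply (rule card_mono)
        using assms(1) unfolding Nc_def by auto
      finally show ?thesis .
    qed
  qed
  then have "S \<subseteq> ?C" using good_sub_core by blast
  then show False using assms(2,3) by blast
qed



lemma peel_sum:
  assumes fin: "finite V" and EV: "E \<subseteq> edges_on V"
  shows "S \<subseteq> V - core V E c i d \<Longrightarrow>
    (\<Sum>s\<in>S. card (Nc V E c i s \<inter> S) + 2 * card (Nc V E c i s \<inter> core V E c i d))
      \<le> 2 * (d - 1) * card S"
proof (induction "card S" arbitrary: S rule: less_induct)
  case less
  let ?C = "core V E c i d"
  let ?N = "Nc V E c i"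
  show ?case
  proof (cases "S = {}")
    case True then show ?thesis by simp
  next
    case False
    have finS: "finite S" using less.prems fin finite_subset by blast
    obtain s where s: "s \<in> S" "card (?N s \<inter> (S \<union> ?C)) < d"
      using peel_exists[OF fin less.prems False] by blast
    define S' where "S' = S - {s}"
    have S'sub: "S' \<subseteq> V - ?C" using less.prems S'_def by auto
    have cS: "card S = Suc (card S')" using s(1) finS S'_def
      by (metis card_Suc_Diff1)
    have IH: "(\<Sum>x\<in>S'. card (?N x \<inter> S') + 2 * card (?N x \<inter> ?C)) \<le> 2 * (d - 1) * card S'"
      using less.hyps[of S'] cS S'sub by auto
    have finS': "finite S'" using finS S'_def by auto
    have nl: "s \<notin> ?N s" using no_loop[OF EV] unfolding Nc_def by auto
    have split1: "\<And>x. x \<in> S' \<Longrightarrow> card (?N x \<inter> S) = card (?N x \<inter> S') + (if s \<in> ?N x then 1 else 0)"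
    proof -
      fix x assume x: "x \<in> S'"
      have eq: "?N x \<inter> S = (?N x \<inter> S') \<union> (if s \<in> ?N x then {s} else {})"
        using s(1) S'_def by auto
      show "card (?N x \<inter> S) = card (?N x \<inter> S') + (if s \<in> ?N x then 1 else 0)"
        unfolding eq using finS' S'_def by (auto simp: card_insert_if)
    qed
    have cnt: "(\<Sum>x\<in>S'. (if s \<in> ?N x then 1 else 0::nat)) = card (?N s \<inter> S')"
    proof -
      have "(\<Sum>x\<in>S'. (if s \<in> ?N x then 1 else 0::nat)) = card {x\<in>S'. s \<in> ?N x}"
        using finS' by (simp add: sum.If_cases Int_def)
      also have "{x\<in>S'. s \<in> ?N x} = ?N s \<inter> S'"
        using Nc_sym[of _ V s E c i] S'sub s(1) less.prems by auto
      finally show ?thesis .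
    qed
    have sS: "?N s \<inter> S = ?N s \<inter> S'" using nl S'_def by auto
    have disj: "card (?N s \<inter> S') + card (?N s \<inter> ?C) = card (?N s \<inter> (S' \<union> ?C))"
    proof -
      have "?N s \<inter> (S' \<union> ?C) = (?N s \<inter> S') \<union> (?N s \<inter> ?C)" by auto
      moreover have "finite (?N s \<inter> S')" "finite (?N s \<inter> ?C)"
        using finS' fin core_sub[of V E c i d] finite_subset by auto
      moreover have "(?N s \<inter> S') \<inter> (?N s \<inter> ?C) = {}" using S'sub by auto
      ultimately show ?thesis by (simp add: card_Un_disjoint)
    qed
    have mono: "card (?N s \<inter> (S' \<union> ?C)) \<le> card (?N s \<inter> (S \<union> ?C))"
      apply (rule card_mono) using fin unfolding Nc_def S'_def by auto
    have "(\<Sum>x\<in>S. card (?N x \<inter> S) + 2 * card (?N x \<inter> ?C))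
        = (card (?N s \<inter> S) + 2 * card (?N s \<inter> ?C)) +
          (\<Sum>x\<in>S'. card (?N x \<inter> S) + 2 * card (?N x \<inter> ?C))"
      using finS s(1) S'_def by (simp add: sum.remove)
    also have "(\<Sum>x\<in>S'. card (?N x \<inter> S) + 2 * card (?N x \<inter> ?C))
        = (\<Sum>x\<in>S'. card (?N x \<inter> S') + 2 * card (?N x \<inter> ?C)) + (\<Sum>x\<in>S'. (if s \<in> ?N x then 1 else 0::nat))"
      by (simp add: split1 sum.distrib)
    finally have "(\<Sum>x\<in>S. card (?N x \<inter> S) + 2 * card (?N x \<inter> ?C))
        = (\<Sum>x\<in>S'. card (?N x \<inter> S') + 2 * card (?N x \<inter> ?C)) + 2 * card (?N s \<inter> (S' \<union> ?C))"
      using cnt sS disj by simp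
    also have "\<dots> \<le> 2 * (d - 1) * card S' + 2 * (d - 1)"
      using IH mono s(2) by linarith
    also have "\<dots> = 2 * (d - 1) * card S" using cS by simp
    finally show ?thesis .
  qed
qed



definition Nall :: "nat set \<Rightarrow> nat set set \<Rightarrow> nat \<Rightarrow> nat set" where
  "Nall V E v = {u\<in>V. {u,v}\<in>E}"

lemma Nall_split:
  assumes col: "is_coloring E c 2" and ij: "i < 2" "j < 2" "i \<noteq> j" and fin: "finite V"
  shows "card (Nall V E v \<inter> Y) = card (Nc V E c i v \<inter> Y) + card (Nc V E c j v \<inter> Y)"
proof -
  have "Nall V E v \<inter> Y = (Nc V E c i v \<inter> Y) \<union> (Nc V E c j v \<inter> Y)"
  proof
    show "Nall V E v \<inter> Y \<subseteq> Nc V E c i v \<inter> Y \<union> Nc V E c j v \<inter> Y"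
    proof
      fix u assume u: "u \<in> Nall V E v \<inter> Y"
      then have "c {u,v} < 2" using col unfolding Nall_def is_coloring_def by auto
      then have "c {u,v} = i \<or> c {u,v} = j" using ij by auto
      then show "u \<in> Nc V E c i v \<inter> Y \<union> Nc V E c j v \<inter> Y"
        using u unfolding Nall_def Nc_def by auto
    qed
  next
    show "Nc V E c i v \<inter> Y \<union> Nc V E c j v \<inter> Y \<subseteq> Nall V E v \<inter> Y"
      unfolding Nall_def Nc_def by auto
  qed
  moreover have "finite (Nc V E c i v \<inter> Y)" "finite (Nc V E c j v \<inter> Y)"
    using fin unfolding Nc_def by auto
  moreover have "(Nc V E c i v \<inter> Y) \<inter> (Nc V E c j v \<inter> Y) = {}"
    using ij unfolding Nc_def by auto
  ultimately show ?thesis by (simp add: card_Un_disjoint)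
qed

lemma sum_swap_N:
  assumes "X \<subseteq> V" "Y \<subseteq> V" "finite V"
  shows "(\<Sum>x\<in>X. card (Nc V E c j x \<inter> Y)) = (\<Sum>y\<in>Y. card (Nc V E c j y \<inter> X))"
proof -
  have fX: "finite X" and fY: "finite Y" using assms finite_subset by auto
  have A: "\<And>x. x \<in> X \<Longrightarrow> card (Nc V E c j x \<inter> Y) = (\<Sum>y\<in>Y. if {y,x} \<in> E \<and> c {y,x} = j then 1 else 0)"
  proof -
    fix x assume "x \<in> X"
    have "Nc V E c j x \<inter> Y = {y\<in>Y. {y,x} \<in> E \<and> c {y,x} = j}"
      using assms unfolding Nc_def by auto
    then show "card (Nc V E c j x \<inter> Y) = (\<Sum>y\<in>Y. if {y,x} \<in> E \<and> c {y,x} = j then 1 else 0)"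
      using fY by (simp add: sum.If_cases Int_def)
  qed
  have B: "\<And>y. y \<in> Y \<Longrightarrow> card (Nc V E c j y \<inter> X) = (\<Sum>x\<in>X. if {y,x} \<in> E \<and> c {y,x} = j then 1 else 0)"
  proof -
    fix y assume "y \<in> Y"
    have "Nc V E c j y \<inter> X = {x\<in>X. {y,x} \<in> E \<and> c {y,x} = j}"
      using assms unfolding Nc_def by (auto simp: insert_commute)
    then show "card (Nc V E c j y \<inter> X) = (\<Sum>x\<in>X. if {y,x} \<in> E \<and> c {y,x} = j then 1 else 0)"
      using fX by (simp add: sum.If_cases Int_def)
  qed
  have sw: "(\<Sum>x\<in>X. \<Sum>y\<in>Y. (if {y,x} \<in> E \<and> c {y,x} = j then 1 else (0::nat)))
     = (\<Sum>y\<in>Y. \<Sum>x\<in>X. (if {y,x} \<in> E \<and> c {y,x} = j then 1 else (0::nat)))"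
    by (rule sum.swap)
  show ?thesis
    using A B sw by (simp cong: sum.cong)
qed

lemma peel_card:
  assumes fin: "finite V" and EV: "E \<subseteq> edges_on V"
  shows "(\<Sum>x\<in>V - core V E c i d. card (Nc V E c i x)) \<le> 2 * (d - 1) * card (V - core V E c i d)"
proof -
  let ?X = "V - core V E c i d" and ?C = "core V E c i d"
  have "card (Nc V E c i x) \<le> card (Nc V E c i x \<inter> ?X) + 2 * card (Nc V E c i x \<inter> ?C)" for x
  proof -
    have "Nc V E c i x = (Nc V E c i x \<inter> ?X) \<union> (Nc V E c i x \<inter> ?C)" unfolding Nc_def by auto
    then have "card (Nc V E c i x) \<le> card (Nc V E c i x \<inter> ?X) + card (Nc V E c i x \<inter> ?C)"
      by (metis card_Un_le)
    then show ?thesis by linarith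
  qed
  then have "(\<Sum>x\<in>?X. card (Nc V E c i x)) \<le> (\<Sum>x\<in>?X. card (Nc V E c i x \<inter> ?X) + 2 * card (Nc V E c i x \<inter> ?C))"
    by (intro sum_mono) auto
  also have "\<dots> \<le> 2 * (d - 1) * card ?X" by (rule peel_sum[OF fin EV]) auto
  finally show ?thesis .
qed

lemma peel_cross:
  assumes fin: "finite V" and EV: "E \<subseteq> edges_on V" and Y: "Y \<subseteq> core V E c i d"
  shows "(\<Sum>x\<in>V - core V E c i d. card (Nc V E c i x \<inter> Y)) \<le> (d - 1) * card (V - core V E c i d)"
proof -
  let ?X = "V - core V E c i d" and ?C = "core V E c i d"
  have "2 * card (Nc V E c i x \<inter> Y) \<le> card (Nc V E c i x \<inter> ?X) + 2 * card (Nc V E c i x \<inter> ?C)" for x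
  proof -
    have "card (Nc V E c i x \<inter> Y) \<le> card (Nc V E c i x \<inter> ?C)"
      apply (rule card_mono) using fin Y unfolding Nc_def by auto
    then show ?thesis by linarith
  qed
  then have "(\<Sum>x\<in>?X. 2 * card (Nc V E c i x \<inter> Y)) \<le> (\<Sum>x\<in>?X. card (Nc V E c i x \<inter> ?X) + 2 * card (Nc V E c i x \<inter> ?C))"
    by (intro sum_mono) auto
  also have "\<dots> \<le> 2 * (d - 1) * card ?X" by (rule peel_sum[OF fin EV]) auto
  finally show ?thesis by (simp add: sum_distrib_left[symmetric])
qed

lemma deg_Nall: "deg V E v = card (Nall V E v)"
  unfolding deg_def Nall_def by simp

lemma nonnbr_bound:
  assumes fin: "finite V" and cV: "card V = n" and md: "min_deg_ge V E (n - k)" and x: "x \<in> V"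
    and that: "Y \<subseteq> V"
  shows "card Y \<le> card (Nall V E x \<inter> Y) + k"
proof -
  have "n - k \<le> card (Nall V E x)" using md x unfolding min_deg_ge_def deg_Nall by auto
  have sub: "Nall V E x \<subseteq> V" unfolding Nall_def by auto
  have cd: "card (V - Nall V E x) = n - card (Nall V E x)"
    using card_Diff_subset[OF finite_subset[OF sub fin] sub] cV by simp
  have "Y \<subseteq> (Nall V E x \<inter> Y) \<union> (V - Nall V E x)" using that by auto
  then have "card Y \<le> card ((Nall V E x \<inter> Y) \<union> (V - Nall V E x))"
    apply (intro card_mono) using fin that unfolding Nall_def by auto
  also have "\<dots> \<le> card (Nall V E x \<inter> Y) + card (V - Nall V E x)" by (rule card_Un_le)
  finally show ?thesis using cd \<open>n - k \<le> card (Nall V E x)\<close> by linarith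
qed

lemma nonnbr_bound2:
  assumes fin: "finite V" and cV: "card V = n" and md: "min_deg_ge V E (n - k)" and x: "x \<in> V"
    and EV: "E \<subseteq> edges_on V" and k: "0 < k"
    and that: "Y \<subseteq> V" "x \<notin> Y"
  shows "card Y + 1 \<le> card (Nall V E x \<inter> Y) + k"
proof -
  have "n - k \<le> card (Nall V E x)" using md x unfolding min_deg_ge_def deg_Nall by auto
  have sub: "Nall V E x \<subseteq> V" unfolding Nall_def by auto
  have nx: "x \<notin> Nall V E x" using no_loop[OF EV] unfolding Nall_def by auto
  have sub2: "insert x (Nall V E x) \<subseteq> V" using sub x by auto
  have cd: "card (V - insert x (Nall V E x)) = n - Suc (card (Nall V E x))"
    using card_Diff_subset[OF finite_subset[OF sub2 fin] sub2] cV nx finite_subset[OF sub fin] by simp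
  have "Y \<subseteq> (Nall V E x \<inter> Y) \<union> (V - insert x (Nall V E x))" using that by auto
  then have "card Y \<le> card ((Nall V E x \<inter> Y) \<union> (V - insert x (Nall V E x)))"
    apply (intro card_mono) using fin that unfolding Nall_def by auto
  also have "\<dots> \<le> card (Nall V E x \<inter> Y) + card (V - insert x (Nall V E x))" by (rule card_Un_le)
  finally show ?thesis using cd \<open>n - k \<le> card (Nall V E x)\<close> k by linarith
qed



lemma half:
  assumes fin: "finite V" and EV: "E \<subseteq> edges_on V" and cV: "card V = n"
    and md: "min_deg_ge V E (n - k)" and col: "is_coloring E c 2"
    and ij: "i < 2" "j < 2" "i \<noteq> j"
  shows "card (V - core V E c i d) * card (V - core V E c j d)
     \<le> 2 * (d - 1) * (card (V - core V E c i d) + card (V - core V E c j d)) + card (V - core V E c i d) * k"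
proof -
  define X where "X = V - core V E c i d"
  define Y where "Y = V - core V E c j d"
  have XV: "X \<subseteq> V" and YV: "Y \<subseteq> V" unfolding X_def Y_def by auto
  have fX: "finite X" using XV fin finite_subset by auto
  have lb: "card X * card Y \<le> (\<Sum>x\<in>X. card (Nall V E x \<inter> Y)) + card X * k"
  proof -
    have "(\<Sum>x\<in>X. card Y) \<le> (\<Sum>x\<in>X. card (Nall V E x \<inter> Y) + k)"
      by (intro sum_mono nonnbr_bound[OF fin cV md _ YV]) (use XV in auto)
    then show ?thesis by (simp add: sum.distrib mult.commute)
  qed
  have "(\<Sum>x\<in>X. card (Nall V E x \<inter> Y)) = (\<Sum>x\<in>X. card (Nc V E c i x \<inter> Y)) + (\<Sum>x\<in>X. card (Nc V E c j x \<inter> Y))"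
    using Nall_split[OF col ij fin] by (simp add: sum.distrib)
  also have "(\<Sum>x\<in>X. card (Nc V E c i x \<inter> Y)) \<le> (\<Sum>x\<in>X. card (Nc V E c i x))"
    by (intro sum_mono card_mono) (auto simp: Nc_def fin)
  also have "\<dots> \<le> 2 * (d - 1) * card X" unfolding X_def by (rule peel_card[OF fin EV])
  also have "(\<Sum>x\<in>X. card (Nc V E c j x \<inter> Y)) = (\<Sum>y\<in>Y. card (Nc V E c j y \<inter> X))"
    by (rule sum_swap_N[OF XV YV fin])
  also have "\<dots> \<le> (\<Sum>y\<in>Y. card (Nc V E c j y))"
    by (intro sum_mono card_mono) (auto simp: Nc_def fin)
  also have "\<dots> \<le> 2 * (d - 1) * card Y" unfolding Y_def by (rule peel_card[OF fin EV])
  finally have "(\<Sum>x\<in>X. card (Nall V E x \<inter> Y)) \<le> 2 * (d - 1) * card X + 2 * (d - 1) * card Y" by simp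
  moreover have "2 * (d - 1) * card X + 2 * (d - 1) * card Y = 2 * (d - 1) * (card X + card Y)"
    by (simp add: distrib_left)
  ultimately show ?thesis using lb unfolding X_def[symmetric] Y_def[symmetric] by linarith
qed

lemma half_disj:
  assumes fin: "finite V" and EV: "E \<subseteq> edges_on V" and cV: "card V = n"
    and md: "min_deg_ge V E (n - k)" and col: "is_coloring E c 2"
    and ij: "i < 2" "j < 2" "i \<noteq> j" and k: "0 < k"
    and disj: "(V - core V E c i d) \<inter> (V - core V E c j d) = {}"
  shows "card (V - core V E c i d) * (card (V - core V E c j d) + 1)
     \<le> (d - 1) * (card (V - core V E c i d) + card (V - core V E c j d)) + card (V - core V E c i d) * k"
proof -
  define X where "X = V - core V E c i d"
  define Y where "Y = V - core V E c j d"
  have XV: "X \<subseteq> V" and YV: "Y \<subseteq> V" unfolding X_def Y_def by auto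
  have YC: "Y \<subseteq> core V E c i d" using disj YV unfolding X_def Y_def by auto
  have XC: "X \<subseteq> core V E c j d" using disj XV unfolding X_def Y_def by auto
  have lb: "card X * (card Y + 1) \<le> (\<Sum>x\<in>X. card (Nall V E x \<inter> Y)) + card X * k"
  proof -
    have "(\<Sum>x\<in>X. card Y + 1) \<le> (\<Sum>x\<in>X. card (Nall V E x \<inter> Y) + k)"
      by (intro sum_mono nonnbr_bound2[OF fin cV md _ EV k YV]) (use XV disj in \<open>auto simp: X_def Y_def\<close>)
    then show ?thesis by (simp add: sum.distrib mult.commute)
  qed
  have "(\<Sum>x\<in>X. card (Nall V E x \<inter> Y)) = (\<Sum>x\<in>X. card (Nc V E c i x \<inter> Y)) + (\<Sum>x\<in>X. card (Nc V E c j x \<inter> Y))"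
    using Nall_split[OF col ij fin] by (simp add: sum.distrib)
  also have "(\<Sum>x\<in>X. card (Nc V E c i x \<inter> Y)) \<le> (d - 1) * card X"
    unfolding X_def by (rule peel_cross[OF fin EV YC])
  also have "(\<Sum>x\<in>X. card (Nc V E c j x \<inter> Y)) = (\<Sum>y\<in>Y. card (Nc V E c j y \<inter> X))"
    by (rule sum_swap_N[OF XV YV fin])
  also have "\<dots> \<le> (d - 1) * card Y" unfolding Y_def by (rule peel_cross[OF fin EV XC])
  finally have "(\<Sum>x\<in>X. card (Nall V E x \<inter> Y)) \<le> (d - 1) * card X + (d - 1) * card Y" by simp
  with lb show ?thesis unfolding X_def[symmetric] Y_def[symmetric] by (simp add: algebra_simps)
qed

lemma Zbound:
  assumes fin: "finite V" and EV: "E \<subseteq> edges_on V" and cV: "card V = n"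
    and md: "min_deg_ge V E (n - k)" and col: "is_coloring E c 2"
    and ij: "i < 2" "j < 2" "i \<noteq> j"
    and z: "z \<in> (V - core V E c i d) \<inter> (V - core V E c j d)"
  shows "n \<le> 2 * (d - 1) * (card (V - core V E c i d) + card (V - core V E c j d)) + k"
proof -
  define X where "X = V - core V E c i d"
  define Y where "Y = V - core V E c j d"
  have fX: "finite X" "finite Y" using fin unfolding X_def Y_def by auto
  have "n - k \<le> card (Nall V E z)" using md z unfolding min_deg_ge_def deg_Nall by auto
  also have "card (Nall V E z) = card (Nall V E z \<inter> V)" by (simp add: Nall_def Int_absorb2)
  also have "\<dots> = card (Nc V E c i z \<inter> V) + card (Nc V E c j z \<inter> V)" by (rule Nall_split[OF col ij fin])
  also have "card (Nc V E c i z \<inter> V) \<le> (\<Sum>x\<in>X. card (Nc V E c i x))"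
    using member_le_sum[of z X "\<lambda>x. card (Nc V E c i x)"] z fX unfolding X_def
    by (simp add: Nc_def Int_absorb2)
  also have "\<dots> \<le> 2 * (d - 1) * card X" unfolding X_def by (rule peel_card[OF fin EV])
  also have "card (Nc V E c j z \<inter> V) \<le> (\<Sum>y\<in>Y. card (Nc V E c j y))"
    using member_le_sum[of z Y "\<lambda>x. card (Nc V E c j x)"] z fX unfolding Y_def
    by (simp add: Nc_def Int_absorb2)
  also have "\<dots> \<le> 2 * (d - 1) * card Y" unfolding Y_def by (rule peel_card[OF fin EV])
  finally show ?thesis unfolding X_def Y_def by (simp add: algebra_simps)
qed



lemma arith2_aux:
  fixes a b D k :: int
  assumes "a \<le> b" "2*D + k \<le> a" "1 \<le> k" "0 \<le> D"
    "a*(b+1) \<le> D*(a+b) + a*k"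
  shows False
proof -
  have "(a - D) * a \<le> (a - D) * b" using assms by (intro mult_left_mono) auto
  then have "a*a + a \<le> 2*D*a + a*k" using assms(5) by (simp add: algebra_simps)
  then have "a * (a + 1) \<le> a * (2*D + k)" by (simp add: algebra_simps)
  then have "a + 1 \<le> 2*D + k" using assms by (simp add: mult_le_cancel_left)
  then show False using assms by linarith
qed

lemma arith2:
  fixes a b D k :: nat
  assumes "2*D + k \<le> a" "2*D + k \<le> b" "1 \<le> k"
    "a*(b+1) \<le> D*(a+b) + a*k" "b*(a+1) \<le> D*(b+a) + b*k"
  shows False
proof -
  have i1: "int a*(int b+1) \<le> int D*(int a+int b) + int a*int k"
  proof -
    have "int (a*(b+1)) \<le> int (D*(a+b) + a*k)" using assms(4) by (simp only: of_nat_le_iff)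
    then show ?thesis by (simp add: algebra_simps)
  qed
  have i2: "int b*(int a+1) \<le> int D*(int b+int a) + int b*int k"
  proof -
    have "int (b*(a+1)) \<le> int (D*(b+a) + b*k)" using assms(5) by (simp only: of_nat_le_iff)
    then show ?thesis by (simp add: algebra_simps)
  qed
  show False
  proof (cases "a \<le> b")
    case True then show ?thesis using arith2_aux[of "int a" "int b" "int D" "int k"] i1 assms by simp
  next
    case False then show ?thesis using arith2_aux[of "int b" "int a" "int D" "int k"] i2 assms by simp
  qed
qed

lemma arith1_aux:
  fixes a b D k :: int
  assumes "a \<le> b" "2*D + k \<le> a" "1 \<le> k" "0 \<le> D"
    "a*b \<le> 2*D*(a+b) + a*k" "b*a \<le> 2*D*(a+b) + b*k"
  shows "a + b \<le> 2*(4*D+k)*(2*D+k)"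
proof -
  have "2*a*b \<le> (4*D+k)*(a+b)" using assms(5,6) by (simp add: algebra_simps)
  also have "\<dots> \<le> (4*D+k)*(2*b)" using assms by (intro mult_left_mono) auto
  finally have "b * (2*a) \<le> b * (2*(4*D+k))" by (simp add: algebra_simps)
  then have a1: "a \<le> 4*D+k" using assms by (simp add: mult_le_cancel_left)
  have "b*(a - 2*D) \<le> a*(2*D+k)" using assms(5) by (simp add: algebra_simps)
  moreover have "b*1 \<le> b*(a - 2*D)" using assms by (intro mult_left_mono) auto
  moreover have "a*(2*D+k) \<le> (4*D+k)*(2*D+k)" using a1 assms by (intro mult_right_mono) auto
  ultimately have "b \<le> (4*D+k)*(2*D+k)" by linarith
  moreover have "a \<le> (4*D+k)*(2*D+k)"
  proof -
    have "a*1 \<le> a*(2*D+k)" using assms by (intro mult_left_mono) auto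
    moreover have "a*(2*D+k) \<le> (4*D+k)*(2*D+k)" using a1 assms by (intro mult_right_mono) auto
    ultimately show ?thesis by simp
  qed
  ultimately show ?thesis by linarith
qed

lemma arith1:
  fixes a b D k :: nat
  assumes "2*D + k \<le> a" "2*D + k \<le> b" "1 \<le> k"
    "a*b \<le> 2*D*(a+b) + a*k" "b*a \<le> 2*D*(b+a) + b*k"
  shows "a + b \<le> 2*(4*D+k)*(2*D+k)"
proof -
  have i1: "int a*int b \<le> 2*int D*(int a+int b) + int a*int k"
  proof -
    have "int (a*b) \<le> int (2*D*(a+b) + a*k)" using assms(4) by (simp only: of_nat_le_iff)
    then show ?thesis by (simp add: algebra_simps)
  qed
  have i2: "int b*int a \<le> 2*int D*(int b+int a) + int b*int k"
  proof -
    have "int (b*a) \<le> int (2*D*(b+a) + b*k)" using assms(5) by (simp only: of_nat_le_iff)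
    then show ?thesis by (simp add: algebra_simps)
  qed
  have "int a + int b \<le> 2*(4*int D+int k)*(2*int D+int k)"
  proof (cases "a \<le> b")
    case True then show ?thesis using arith1_aux[of "int a" "int b" "int D" "int k"] i1 i2 assms
      by (simp add: algebra_simps)
  next
    case False then show ?thesis using arith1_aux[of "int b" "int a" "int D" "int k"] i1 i2 assms
      by (simp add: algebra_simps)
  qed
  then have "int (a + b) \<le> int (2*(4*D+k)*(2*D+k))" by simp
  then show ?thesis by (simp only: of_nat_le_iff)
qed



lemma has_mono_sub_mono:
  "has_mono_sub V E c d t \<Longrightarrow> t' \<le> t \<Longrightarrow> has_mono_sub V E c d t'"
  unfolding has_mono_sub_def by (meson order_trans)

lemma lower:
  assumes fin: "finite V" and EV: "E \<subseteq> edges_on V" and cV: "card V = n"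
    and md: "min_deg_ge V E (n - k)" and col: "is_coloring E c 2"
    and k: "1 \<le> k" and d: "1 \<le> d"
    and nl: "2*(d-1)*(2*(4*(d-1)+k)*(2*(d-1)+k)) + k < n"
  shows "has_mono_sub V E c d (n - (2*d+k-3))"
proof (rule ccontr)
  assume neg: "\<not> ?thesis"
  define D where "D = d - 1"
  have M: "2*d+k-3 = 2*D + k - 1" unfolding D_def using d k by simp
  define X where "X = V - core V E c 0 d"
  define Y where "Y = V - core V E c 1 d"
  have cX: "card X = n - card (core V E c 0 d)"
    unfolding X_def using cV card_Diff_subset[OF finite_subset[OF core_sub fin] core_sub] by simp
  have cY: "card Y = n - card (core V E c 1 d)"
    unfolding Y_def using cV card_Diff_subset[OF finite_subset[OF core_sub fin] core_sub] by simp
  have c0: "card (core V E c 0 d) < n - (2*d+k-3)"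
    using neg has_mono_sub_mono[OF core_mono_sub[OF fin EV, of c d 0]] not_less by blast
  have c1: "card (core V E c 1 d) < n - (2*d+k-3)"
    using neg has_mono_sub_mono[OF core_mono_sub[OF fin EV, of c d 1]] not_less by blast
  have a: "2*D + k \<le> card X" using c0 cX M k by linarith
  have b: "2*D + k \<le> card Y" using c1 cY M k by linarith
  show False
  proof (cases "X \<inter> Y = {}")
    case False
    then obtain z where z: "z \<in> X \<inter> Y" by blast
    have h1: "card X * card Y \<le> 2*D*(card X + card Y) + card X * k"
      using half[OF fin EV cV md col, of 0 1 d] unfolding X_def Y_def D_def by simp
    have h2: "card Y * card X \<le> 2*D*(card Y + card X) + card Y * k"
      using half[OF fin EV cV md col, of 1 0 d] unfolding X_def Y_def D_def by simp
    have s: "card X + card Y \<le> 2*(4*D+k)*(2*D+k)" by (rule arith1[OF a b k h1 h2])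
    have "n \<le> 2*D*(card X + card Y) + k"
      using Zbound[OF fin EV cV md col, of 0 1 z d] z unfolding X_def Y_def D_def by simp
    also have "\<dots> \<le> 2*D*(2*(4*D+k)*(2*D+k)) + k" using s by simp
    finally show False using nl unfolding D_def by linarith
  next
    case True
    have h1: "card X * (card Y + 1) \<le> D*(card X + card Y) + card X * k"
      using half_disj[OF fin EV cV md col, of 0 1 d] True k unfolding X_def Y_def D_def by simp
    have h2: "card Y * (card X + 1) \<le> D*(card Y + card X) + card Y * k"
      using half_disj[OF fin EV cV md col, of 1 0 d] True k unfolding X_def Y_def D_def
      by (simp add: Int_commute)
    show False by (rule arith2[OF a b k h1 h2])
  qed
qed



definition off :: "nat \<Rightarrow> nat \<Rightarrow> nat \<Rightarrow> nat" where
  "off M p q = (if M + p \<le> q then q - M - p else q - p)"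

definition bad :: "nat \<Rightarrow> nat \<Rightarrow> nat \<Rightarrow> nat \<Rightarrow> bool" where
  "bad M d p q \<longleftrightarrow> p < M \<and> M \<le> q \<and> q < 2*M \<and> 2*d - 2 \<le> off M p q"

definition redPQ :: "nat \<Rightarrow> nat \<Rightarrow> nat \<Rightarrow> nat \<Rightarrow> bool" where
  "redPQ M d p q \<longleftrightarrow> p < M \<and> M \<le> q \<and> q < 2*M \<and> off M p q < d - 1"

definition E0 :: "nat \<Rightarrow> nat \<Rightarrow> nat \<Rightarrow> nat set set" where
  "E0 n M d = {{u,v} | u v. u < n \<and> v < n \<and> u \<noteq> v \<and> \<not> bad M d u v \<and> \<not> bad M d v u}"

definition c0 :: "nat \<Rightarrow> nat \<Rightarrow> nat set \<Rightarrow> nat" where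
  "c0 M d e = (if \<exists>p q. e = {p,q} \<and> redPQ M d p q then 0 else if \<exists>p\<in>e. p < M then 1 else 0)"

lemma off_lt: "p < M \<Longrightarrow> M \<le> q \<Longrightarrow> q < 2*M \<Longrightarrow> off M p q < M"
  unfolding off_def by auto

lemma inj_off_q: "p < M \<Longrightarrow> inj_on (off M p) {M..<2*M}"
  unfolding inj_on_def off_def by (auto split: if_splits)

lemma inj_off_p: "M \<le> q \<Longrightarrow> q < 2*M \<Longrightarrow> inj_on (\<lambda>p. off M p q) {..<M}"
  unfolding inj_on_def off_def by (auto split: if_splits)

lemma card_range_bound:
  fixes lo0 hi0 :: nat
  assumes "inj_on g A" "A' \<subseteq> A" "\<And>x. x \<in> A' \<Longrightarrow> g x \<in> {lo0..<hi0}"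
  shows "card A' \<le> hi0 - lo0"
proof -
  have "card A' \<le> card {lo0..<hi0}"
    by (rule card_inj_on_le[OF inj_on_subset[OF assms(1,2)]]) (use assms(3) in auto)
  then show ?thesis by simp
qed

lemma E0_graph: "is_graph {..<n} (E0 n M d)"
  unfolding is_graph_def E0_def edges_on_def by auto

lemma E0_mem: "u < n \<Longrightarrow> v < n \<Longrightarrow> u \<noteq> v \<Longrightarrow> \<not> bad M d u v \<Longrightarrow> \<not> bad M d v u \<Longrightarrow> {u,v} \<in> E0 n M d"
  unfolding E0_def by blast

lemma E0_memD:
  assumes "{u,v} \<in> E0 n M d" shows "\<not> bad M d u v \<and> \<not> bad M d v u"
proof -
  obtain x y where "{u,v} = {x,y}" "\<not> bad M d x y" "\<not> bad M d y x"
  proof -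
    have "\<exists>x y. {u,v} = {x,y} \<and> x < n \<and> y < n \<and> x \<noteq> y \<and> \<not> bad M d x y \<and> \<not> bad M d y x"
      using assms unfolding E0_def by (simp only: mem_Collect_eq)
    then show thesis using that by blast
  qed
  then have "(u = x \<and> v = y) \<or> (u = y \<and> v = x)" by (simp add: doubleton_eq_iff)
  then show ?thesis using \<open>\<not> bad M d x y\<close> \<open>\<not> bad M d y x\<close> by blast
qed

lemma badset_card:
  assumes M: "M = 2*d + k - 3" and d: "1 \<le> d" and k: "1 \<le> k"
  shows "card {u. bad M d u v \<or> bad M d v u} \<le> k - 1"
proof (cases "v < M")
  case True
  have "{u. bad M d u v \<or> bad M d v u} = {u. bad M d v u}" using True unfolding bad_def by auto
  also have "card \<dots> \<le> M - (2*d - 2)"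
    by (rule card_range_bound[OF inj_off_q[OF True]]) (auto simp: bad_def intro: off_lt)
  finally show ?thesis using M d k by simp
next
  case False
  show ?thesis
  proof (cases "v < 2*M")
    case True
    have "{u. bad M d u v \<or> bad M d v u} = {u. bad M d u v}" using False unfolding bad_def by auto
    also have "card \<dots> \<le> M - (2*d - 2)"
      by (rule card_range_bound[OF inj_off_p[of M v]]) (use False True in \<open>auto simp: bad_def intro: off_lt\<close>)
    finally show ?thesis using M d k by simp
  next
    case F2: False
    have "{u. bad M d u v \<or> bad M d v u} = {}" using False F2 unfolding bad_def by auto
    then show ?thesis by simp
  qed
qed

lemma E0_mindeg:
  assumes M: "M = 2*d + k - 3" and d: "1 \<le> d" and k: "1 \<le> k"
  shows "min_deg_ge {..<n} (E0 n M d) (n - k)"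
  unfolding min_deg_ge_def deg_def
proof
  fix v assume v: "v \<in> {..<n}"
  let ?B = "{u. bad M d u v \<or> bad M d v u}"
  have fB: "finite ?B"
  proof -
    have "?B \<subseteq> {..<2*M}" unfolding bad_def by auto
    then show ?thesis using finite_subset by blast
  qed
  have sub: "{..<n} - insert v ?B \<subseteq> {u \<in> {..<n}. {u, v} \<in> E0 n M d}"
    using v by (auto intro!: E0_mem)
  have "n - card (insert v ?B) \<le> card ({..<n} - insert v ?B)"
    using diff_card_le_card_Diff[of "insert v ?B" "{..<n}"] fB by simp
  also have "\<dots> \<le> card {u \<in> {..<n}. {u, v} \<in> E0 n M d}"
    by (rule card_mono[OF _ sub]) simp
  finally have "n - card (insert v ?B) \<le> card {u \<in> {..<n}. {u, v} \<in> E0 n M d}" .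
  moreover have "card (insert v ?B) \<le> k"
  proof -
    have "card (insert v ?B) \<le> Suc (card ?B)" using fB by (simp add: card_insert_if)
    then show ?thesis using badset_card[OF M d k, of v] k by linarith
  qed
  ultimately show "n - k \<le> card {u \<in> {..<n}. {u, v} \<in> E0 n M d}" by linarith
qed



lemma red_deg:
  assumes p: "p < M"
  shows "card (Nc {..<n} (E0 n M d) (c0 M d) 0 p) \<le> d - 1"
proof -
  have key: "u \<in> {M..<2*M} \<and> off M p u < d - 1" if u: "u \<in> Nc {..<n} (E0 n M d) (c0 M d) 0 p" for u
  proof -
    have c: "c0 M d {u,p} = 0" using u unfolding Nc_def by simp
    have "\<exists>x\<in>{u,p}. x < M" using p by auto
    then have "\<exists>p' q'. {u,p} = {p',q'} \<and> redPQ M d p' q'"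
      using c unfolding c0_def by (auto split: if_splits)
    then obtain p' q' where pq: "{u,p} = {p',q'}" "redPQ M d p' q'" by blast
    then have "(u = p' \<and> p = q') \<or> (u = q' \<and> p = p')" by (simp add: doubleton_eq_iff)
    then have "u = q'" "p = p'" using pq(2) p unfolding redPQ_def by auto
    then show ?thesis using pq(2) unfolding redPQ_def by auto
  qed
  have "card (Nc {..<n} (E0 n M d) (c0 M d) 0 p) \<le> (d - 1) - 0"
    by (rule card_range_bound[OF inj_off_q[OF p]]) (use key in auto)
  then show ?thesis by simp
qed

lemma blue_deg:
  assumes q: "M \<le> q" "q < 2*M" and i: "i \<noteq> 0"
  shows "card (Nc {..<n} (E0 n M d) (c0 M d) i q) \<le> d - 1"
proof -
  have key: "u \<in> {..<M} \<and> d - 1 \<le> off M u q \<and> off M u q < 2*d - 2"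
    if u: "u \<in> Nc {..<n} (E0 n M d) (c0 M d) i q" for u
  proof -
    have c: "c0 M d {u,q} = i" and e: "{u,q} \<in> E0 n M d" using u unfolding Nc_def by auto
    have nr: "\<not> (\<exists>p' q'. {u,q} = {p',q'} \<and> redPQ M d p' q')" and ex: "\<exists>x\<in>{u,q}. x < M"
      using c i unfolding c0_def by (auto split: if_splits)
    have uM: "u < M" using ex q by auto
    have "\<not> redPQ M d u q" using nr by blast
    then have "d - 1 \<le> off M u q" using uM q unfolding redPQ_def by auto
    moreover have "\<not> bad M d u q" using E0_memD[OF e] by blast
    then have "off M u q < 2*d - 2" using uM q unfolding bad_def by auto
    ultimately show ?thesis using uM by auto
  qed
  have "card (Nc {..<n} (E0 n M d) (c0 M d) i q) \<le> (2*d - 2) - (d - 1)"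
    by (rule card_range_bound[OF inj_off_p[OF q]]) (use key in auto)
  then show ?thesis by simp
qed

lemma deg_le_Nc:
  assumes "V' \<subseteq> {..<n}" "E' \<subseteq> E" "\<forall>e\<in>E'. c e = i"
  shows "deg V' E' v \<le> card (Nc {..<n} E c i v)"
  unfolding deg_def Nc_def
  by (rule card_mono) (use assms in auto)

lemma upper_sub:
  assumes t: "has_mono_sub {..<n} (E0 n M d) (c0 M d) d t" and n: "2*M \<le> n" and d: "1 \<le> d"
  shows "t \<le> n - M"
proof -
  obtain V' E' i where h: "V' \<subseteq> {..<n}" "E' \<subseteq> E0 n M d" "E' \<subseteq> edges_on V'"
    "\<forall>e\<in>E'. c0 M d e = i" "min_deg_ge V' E' d" "t \<le> card V'"
    using t unfolding has_mono_sub_def by blast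
  show ?thesis
  proof (cases "i = 0")
    case True
    have "V' \<subseteq> {..<n} - {..<M}"
    proof
      fix v assume v: "v \<in> V'"
      have "d \<le> deg V' E' v" using h(5) v unfolding min_deg_ge_def by auto
      also have "\<dots> \<le> card (Nc {..<n} (E0 n M d) (c0 M d) i v)" by (rule deg_le_Nc[OF h(1,2,4)])
      finally have "\<not> v < M" using red_deg[of v M n d] True d by auto
      then show "v \<in> {..<n} - {..<M}" using v h(1) by auto
    qed
    then have "card V' \<le> card ({..<n} - {..<M})" by (intro card_mono) auto
    also have "\<dots> = n - M" using n by simp
    finally show ?thesis using h(6) by simp
  next
    case False
    have "V' \<subseteq> {..<n} - {M..<2*M}"
    proof
      fix v assume v: "v \<in> V'"
      have "d \<le> deg V' E' v" using h(5) v unfolding min_deg_ge_def by auto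
      also have "\<dots> \<le> card (Nc {..<n} (E0 n M d) (c0 M d) i v)" by (rule deg_le_Nc[OF h(1,2,4)])
      finally have "\<not> (M \<le> v \<and> v < 2*M)" using blue_deg[of M v i n d] False d by auto
      then show "v \<in> {..<n} - {M..<2*M}" using v h(1) by auto
    qed
    then have "card V' \<le> card ({..<n} - {M..<2*M})" by (intro card_mono) auto
    also have "\<dots> = n - M"
    proof -
      have "{M..<2*M} \<subseteq> {..<n}" using n by auto
      then show ?thesis by (simp add: card_Diff_subset)
    qed
    finally show ?thesis using h(6) by simp
  qed
qed

lemma fG_upper:
  assumes n: "2*M \<le> n" and d: "1 \<le> d"
  shows "fG {..<n} (E0 n M d) d 2 \<le> n - M"
proof -
  let ?P = "\<lambda>t. \<forall>c. is_coloring (E0 n M d) c 2 \<longrightarrow> has_mono_sub {..<n} (E0 n M d) c d t"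
  have col: "is_coloring (E0 n M d) (c0 M d) 2" unfolding is_coloring_def c0_def by auto
  have P0: "?P 0"
    unfolding has_mono_sub_def min_deg_ge_def
    by (intro allI impI exI[of _ "{}"] exI[of _ "{}"] exI[of _ 0]) auto
  have bnd: "\<And>y. ?P y \<Longrightarrow> y \<le> n - M" using upper_sub[OF _ n d] col by blast
  have "?P (Greatest ?P)" by (rule GreatestI_nat[where P="?P", OF P0 bnd])
  then show ?thesis unfolding fG_def using bnd by blast
qed


lemma fG_lower:
  assumes E: "is_graph {..<n} E" and md: "min_deg_ge {..<n} E (n - k)"
    and k: "1 \<le> k" and d: "1 \<le> d"
    and nl: "2*(d-1)*(2*(4*(d-1)+k)*(2*(d-1)+k)) + k < n"
  shows "n - (2*d+k-3) \<le> fG {..<n} E d 2"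
proof -
  let ?P = "\<lambda>t. \<forall>c. is_coloring E c 2 \<longrightarrow> has_mono_sub {..<n} E c d t"
  have EV: "E \<subseteq> edges_on {..<n}" using E unfolding is_graph_def by auto
  have P: "?P (n - (2*d+k-3))"
    using lower[OF _ EV _ md _ k d nl] by auto
  have bnd: "y \<le> n" if "?P y" for y
  proof -
    have "is_coloring E (\<lambda>_. 0) 2" unfolding is_coloring_def by auto
    then have "has_mono_sub {..<n} E (\<lambda>_. 0) d y" using that by blast
    then obtain V' where "V' \<subseteq> {..<n}" "y \<le> card V'" unfolding has_mono_sub_def by blast
    moreover have "card V' \<le> n" using \<open>V' \<subseteq> {..<n}\<close> card_mono[of "{..<n}" V'] by simp
    ultimately show ?thesis by linarith
  qed
  show ?thesis unfolding fG_def by (rule Greatest_le_nat[where P="?P", OF P bnd])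
qed

theorem theorem1p3:
  fixes d k :: nat
  assumes "0 < d" and "0 < k"
  shows "\<exists>N. \<forall>n\<ge>N. int (f n (n - k) d 2) = int n - 2 * int d - int k + 3"
proof -
  define M where "M = 2*d + k - 3"
  define N where "N = 2*(d-1)*(2*(4*(d-1)+k)*(2*(d-1)+k)) + k + 1 + 2*M"
  have d: "1 \<le> d" and k: "1 \<le> k" using assms by auto
  show ?thesis
  proof (intro exI allI impI)
    fix n assume n: "N \<le> n"
    have nl: "2*(d-1)*(2*(4*(d-1)+k)*(2*(d-1)+k)) + k < n" using n unfolding N_def by linarith
    have n2: "2*M \<le> n" using n unfolding N_def by linarith
    let ?G = "{E. is_graph {..<n} E \<and> min_deg_ge {..<n} E (n - k)}"
    let ?S = "{fG {..<n} E d 2 | E. is_graph {..<n} E \<and> min_deg_ge {..<n} E (n - k)}"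
    have Seq: "?S = (\<lambda>E. fG {..<n} E d 2) ` ?G" by auto
    have "?G \<subseteq> Pow (Pow {..<n})" unfolding is_graph_def edges_on_def by auto
    then have "finite ?G" by (rule finite_subset) simp
    then have finS: "finite ?S" unfolding Seq by simp
    have E0in: "E0 n M d \<in> ?G" using E0_graph E0_mindeg[OF M_def d k] by auto
    have mem: "fG {..<n} (E0 n M d) d 2 \<in> ?S" using E0in by blast
    have neS: "?S \<noteq> {}" using mem by blast
    have up: "Min ?S \<le> n - M"
      using Min_le[OF finS mem] fG_upper[OF n2 d] by linarith
    have lo: "n - M \<le> Min ?S"
    proof (rule Min.boundedI[OF finS neS])
      fix a assume "a \<in> ?S"
      then obtain E where "a = fG {..<n} E d 2" "is_graph {..<n} E" "min_deg_ge {..<n} E (n - k)" by blast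
      then show "n - M \<le> a" using fG_lower[OF _ _ k d nl] unfolding M_def by simp
    qed
    have fe: "f n (n - k) d 2 = n - M" unfolding f_def using up lo by linarith
    have "M \<le> n" using n2 by linarith
    then have "int (n - M) = int n - int M" by simp
    moreover have "int M = 2 * int d + int k - 3" unfolding M_def using d k by simp
    ultimately show "int (f n (n - k) d 2) = int n - 2 * int d - int k + 3" using fe by simp
  qed
qed

end
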